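(* Let $n\ge2$ and $0\le r_l\le r_u<1$. For all $x,y\in\mathbb{B}^n$ with $r_l\le|x|\le|y|\le r_u$, $$\sqrt{\frac{1+r_l^2}{2}}\,\mathrm{th}\frac{\rho_{\mathbb{B}^n}(x,y)}{2}\le b_{\mathbb{B}^n,2}(x,y)\le\frac{1+r_u}{\sqrt2}\,\mathrm{th}\frac{\rho_{\mathbb{B}^n}(x,y)}{2},$$ and these are the best possible constants depending only on $r_l$ and $r_u$.
   Context: $\mathbb{B}^n$ is the unit ball of $\mathbb{R}^n$. The hyperbolic metric of the unit ball satisfies $\mathrm{th}\frac{\rho_{\mathbb{B}^n}(x,y)}{2}=\frac{|x-y|}{\sqrt{|x-y|^2+(1-|x|^2)(1-|y|^2)}}$. For a domain $G\subsetneq\mathbb{R}^n$ and $p\ge1$, the Barrlund metric is $b_{G,p}(x,y)=\sup_{z\in\partial G}\frac{|x-y|}{(|x-z|^p+|z-y|^p)^{1/p}}$. (For the unit ball, $b_{\mathbb{B}^n,2}(x,y)=\frac{|x-y|}{\sqrt{2+|x|^2+|y|^2-2|x+y|}}$.) *)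

theory Defs
  imports "HOL-Analysis.Analysis"
begin

text \<open>Hyperbolic metric of the unit ball, via th(rho/2) = |x-y| / sqrt(|x-y|^2 + (1-|x|^2)(1-|y|^2)).\<close>
definition rho_ball :: "'a::euclidean_space \<Rightarrow> 'a \<Rightarrow> real" where
  "rho_ball x y = 2 * artanh (norm (x - y) /
      sqrt ((norm (x - y))^2 + (1 - (norm x)^2) * (1 - (norm y)^2)))"

definition barrlund :: "'a::euclidean_space set \<Rightarrow> real \<Rightarrow> 'a \<Rightarrow> 'a \<Rightarrow> real" where
  "barrlund G p x y = (SUP z\<in>frontier G.
      norm (x - y) / ((norm (x - z)) powr p + (norm (z - y)) powr p) powr (1 / p))"

end

theory Submission
  imports Defs
begin

lemma tanh_artanh_real:
  fixes t :: real assumes "-1 < t" "t < 1"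
  shows "tanh (artanh t) = t"
proof -
  have p: "(1+t)/(1-t) > 0" using assms by simp
  have "exp (- 2 * artanh t) = (1-t)/(1+t)"
  proof -
    have "- 2 * artanh t = - ln ((1+t)/(1-t))" by (simp add: artanh_def)
    hence "exp (- 2 * artanh t) = inverse ((1+t)/(1-t))" using p by (simp add: exp_minus)
    thus ?thesis by simp
  qed
  moreover have "tanh (artanh t) = (1 - exp (- 2 * artanh t)) / (1 + exp (- 2 * artanh t))"
    by (rule tanh_real_altdef)
  ultimately have "tanh (artanh t) = (1 - (1-t)/(1+t)) / (1 + (1-t)/(1+t))" by simp
  also have "\<dots> = t" using assms by (simp add: field_simps)
  finally show ?thesis .
qed

lemma th_formula:
  fixes x y :: "'a::euclidean_space"
  assumes "norm x < 1" "norm y < 1"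
  shows "tanh (rho_ball x y / 2) = norm (x - y) / sqrt ((norm (x - y))^2 + (1 - (norm x)^2) * (1 - (norm y)^2))"
proof -
  define d where "d = norm (x - y)"
  define P where "P = (1 - (norm x)^2) * (1 - (norm y)^2)"
  have P: "P > 0" unfolding P_def using assms
    by (simp add: abs_square_less_1)
  have E: "d^2 + P > 0" using P by (simp add: add_nonneg_pos)
  have d0: "d \<ge> 0" by (simp add: d_def)
  have "d < sqrt (d^2 + P)"
    using P d0 by (metis add_less_same_cancel1 not_less real_le_rsqrt real_sqrt_less_iff sqrt_le_D less_add_same_cancel1 real_less_rsqrt)
  hence t1: "d / sqrt (d^2+P) < 1" using E by simp
  have t0: "-1 < d / sqrt (d^2+P)" using d0 E
    by (smt (verit) divide_nonneg_pos real_sqrt_gt_zero)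
  show ?thesis unfolding rho_ball_def
    using tanh_artanh_real[OF t0 t1] by (simp add: d_def P_def)
qed

lemma D0_pos:
  fixes x y :: "'a::euclidean_space"
  assumes "norm x < 1" "norm y < 1"
  shows "2 + (norm x)^2 + (norm y)^2 - 2 * norm (x + y) > 0"
proof -
  have "norm (x+y) \<le> norm x + norm y" by (rule norm_triangle_ineq)
  moreover have "(1 - norm x)^2 > 0" using assms by simp
  moreover have "(1 - norm y)^2 \<ge> 0" by simp
  ultimately show ?thesis by (simp add: power2_eq_square algebra_simps)
qed

lemma sum_sq_dist:
  fixes x y z :: "'a::euclidean_space"
  assumes "norm z = 1"
  shows "(norm (x - z))^2 + (norm (z - y))^2 = 2 + (norm x)^2 + (norm y)^2 - 2 * inner z (x + y)"
proof -
  have "inner z z = 1" using assms by (simp add: dot_square_norm)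
  thus ?thesis
    by (simp add: power2_norm_eq_inner inner_diff_left inner_diff_right inner_add_right inner_commute algebra_simps)
qed

lemma barr_formula:
  fixes x y :: "'a::euclidean_space"
  assumes "norm x < 1" "norm y < 1"
  shows "barrlund (ball 0 1) 2 x y = norm (x - y) / sqrt (2 + (norm x)^2 + (norm y)^2 - 2 * norm (x + y))"
proof -
  define D where "D = 2 + (norm x)^2 + (norm y)^2 - 2 * norm (x + y)"
  have D: "D > 0" unfolding D_def using D0_pos[OF assms] .
  define f where "f = (\<lambda>z::'a. norm (x - y) / ((norm (x - z)) powr 2 + (norm (z - y)) powr 2) powr (1 / 2))"
  have f: "f z = norm (x - y) / sqrt (2 + (norm x)^2 + (norm y)^2 - 2 * inner z (x + y))" if "norm z = 1" for z
  proof -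
    have "(norm (x - z)) powr 2 + (norm (z - y)) powr 2 = (norm (x - z))^2 + (norm (z - y))^2"
      by simp
    moreover have "(norm (x - z))^2 + (norm (z - y))^2 \<ge> 0" by simp
    ultimately show ?thesis unfolding f_def using sum_sq_dist[OF that, of x y]
      by (simp add: powr_half_sqrt)
  qed
  obtain z0 :: 'a where z0: "norm z0 = 1" "inner z0 (x + y) = norm (x + y)"
  proof (cases "x + y = 0")
    case True
    obtain z :: 'a where "norm z = 1" using vector_choose_size[of 1] by auto
    thus ?thesis using that True by simp
  next
    case False
    show ?thesis
      apply (rule that[of "(1 / norm (x+y)) *\<^sub>R (x+y)"])
      using False by (simp_all add: power2_norm_eq_inner[symmetric] power2_eq_square)
  qed
  have fz0: "f z0 = norm (x - y) / sqrt D" using f[OF z0(1)] z0(2) by (simp add: D_def)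
  have le: "f z \<le> f z0" if "norm z = 1" for z
  proof -
    have "inner z (x + y) \<le> norm (x + y)" using norm_cauchy_schwarz[of z "x+y"] that by simp
    hence "D \<le> 2 + (norm x)^2 + (norm y)^2 - 2 * inner z (x + y)" by (simp add: D_def)
    hence "sqrt D \<le> sqrt (2 + (norm x)^2 + (norm y)^2 - 2 * inner z (x + y))" by simp
    thus ?thesis using f[OF that] fz0 D
      by (simp add: divide_left_mono)
  qed
  have "barrlund (ball 0 1) 2 x y = Sup (f ` sphere 0 1)"
    unfolding barrlund_def f_def by simp
  also have "\<dots> = f z0"
    by (rule cSup_eq_maximum) (use z0 le in auto)
  finally show ?thesis using fz0 D_def by simp
qed


definition fpoly :: "real \<Rightarrow> real \<Rightarrow> real \<Rightarrow> real" where
  "fpoly a b s = 2 * ((2 * a^2 + 2 * b^2 - s^2) + (1 - a^2) * (1 - b^2)) - (1 + a^2) * (2 + a^2 + b^2 - 2 * s)"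
definition gpoly :: "real \<Rightarrow> real \<Rightarrow> real \<Rightarrow> real" where
  "gpoly a b s = (1 + b)^2 * (2 + a^2 + b^2 - 2 * s) - 2 * ((2 * a^2 + 2 * b^2 - s^2) + (1 - a^2) * (1 - b^2))"

lemma fs1: fixes a b :: real assumes "0\<le>a" "a\<le>b" "b\<le>1" shows "fpoly a b (b-a) \<ge> 0"
proof -
  define u v w where "u = a" and "v = b - a" and "w = 1 - b"
  have uvw: "u \<ge> 0" "v \<ge> 0" "w \<ge> 0" using assms by (auto simp: u_def v_def w_def)
  have "fpoly a b (b-a) = 2* v * w^3 + 5* v^2 * w^2 + 4* v^3 * w + v^4 + 8 * u* v * w^2 + 14 * u* v^2 * w + 6 * u* v^3 + 12 * u^2* v * w + 12 * u^2* v^2 + 8 * u^3* v"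
    unfolding fpoly_def u_def v_def w_def by algebra
  also have "\<dots> \<ge> 0" using uvw by simp
  finally show ?thesis .
qed

lemma fs2: fixes a b :: real assumes "0\<le>a" "a\<le>b" "b\<le>1" shows "fpoly a b (a+b) \<ge> 0"
proof -
  define u v w where "u = a" and "v = b - a" and "w = 1 - b"
  have uvw: "u \<ge> 0" "v \<ge> 0" "w \<ge> 0" using assms by (auto simp: u_def v_def w_def)
  have "fpoly a b (a+b) = 2* v * w^3+5* v^2 * w^2+4* v^3 * w+v^4+4 * u * w^3+12 * u* v * w^2+10 * u* v^2 * w+2 * u* v^3+4 * u^2 * w^2+4 * u^2* v * w"
    unfolding fpoly_def u_def v_def w_def by algebra
  also have "\<dots> \<ge> 0" using uvw by simp
  finally show ?thesis .
qed

lemma gs2: fixes a b :: real assumes "0\<le>a" "a\<le>b" "b\<le>1" shows "gpoly a b (a+b) \<ge> 0"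
proof -
  define u v w where "u = a" and "v = b - a" and "w = 1 - b"
  have uvw: "u \<ge> 0" "v \<ge> 0" "w \<ge> 0" using assms by (auto simp: u_def v_def w_def)
  have "gpoly a b (a+b) = 2* v * w^3+5* v^2 * w^2+4* v^3 * w+2* v^4+4 * u* v * w^2+4 * u* v^2 * w+4 * u* v^3+2 * u^2* v^2"
    unfolding gpoly_def u_def v_def w_def by algebra
  also have "\<dots> \<ge> 0" using uvw by simp
  finally show ?thesis .
qed

lemma f_nonneg: fixes a b s :: real assumes "0\<le>a" "a\<le>b" "b\<le>1" "b-a\<le>s" "s\<le>a+b"
  shows "fpoly a b s \<ge> 0"
proof (cases "a = 0")
  case True
  hence "s = b - a" using assms by simp
  thus ?thesis using fs1[OF assms(1-3)] by simp
next
  case False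
  hence a: "a > 0" using assms by simp
  have "2 * a * fpoly a b s = fpoly a b (b-a) * (a+b-s) + fpoly a b (a+b) * (s-(b-a)) + 4 * a * (s-(b-a)) * (a+b-s)"
    unfolding fpoly_def by algebra
  also have "\<dots> \<ge> 0" using fs1[OF assms(1-3)] fs2[OF assms(1-3)] assms a
    by (intro add_nonneg_nonneg mult_nonneg_nonneg) auto
  finally have "2 * a * fpoly a b s \<ge> 0" .
  thus ?thesis using a by (simp add: zero_le_mult_iff)
qed

lemma g_nonneg: fixes a b s :: real assumes "0\<le>a" "a\<le>b" "b\<le>1" "b-a\<le>s" "s\<le>a+b"
  shows "gpoly a b s \<ge> 0"
proof -
  have "gpoly a b s = gpoly a b (a+b) + (a+b-s) * (2 * (1+b)^2-2 * (s+(a+b)))"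
    unfolding gpoly_def by algebra
  moreover have "2 * (1+b)^2-2 * (s+(a+b)) \<ge> 0"
  proof -
    have "(1-b)^2 \<ge> 0" by simp
    thus ?thesis using assms by (simp add: power2_eq_square algebra_simps)
  qed
  ultimately show ?thesis using gs2[OF assms(1-3)] assms by simp
qed

lemma ratio_le:
  fixes d E D k :: real
  assumes "d \<ge> 0" "E > 0" "D > 0" "k \<ge> 0" "k^2 * D \<le> E"
  shows "k * (d / sqrt E) \<le> d / sqrt D"
proof -
  have "k * sqrt D = sqrt (k^2 * D)" using assms by (simp add: real_sqrt_mult)
  also have "\<dots> \<le> sqrt E" using assms by simp
  finally have 1: "k * sqrt D \<le> sqrt E" .
  have "d * (k * sqrt D) \<le> d * sqrt E" using 1 assms by (simp add: mult_left_mono)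
  thus ?thesis using assms by (simp add: field_simps)
qed

lemma ratio_ge:
  fixes d E D K :: real
  assumes "d \<ge> 0" "E > 0" "D > 0" "K \<ge> 0" "E \<le> K^2 * D"
  shows "d / sqrt D \<le> K * (d / sqrt E)"
proof -
  have "sqrt E \<le> sqrt (K^2 * D)" using assms by simp
  also have "\<dots> = K * sqrt D" using assms by (simp add: real_sqrt_mult)
  finally have 1: "sqrt E \<le> K * sqrt D" .
  have "d * sqrt E \<le> d * (K * sqrt D)" using 1 assms by (simp add: mult_left_mono)
  thus ?thesis using assms by (simp add: field_simps)
qed

lemma ratio_lt:
  fixes d E D c :: real
  assumes "d > 0" "E > 0" "D > 0" "c > 0" "E < c^2 * D"
  shows "d / sqrt D < c * (d / sqrt E)"
proof -
  have "sqrt E < sqrt (c^2 * D)" using assms by simp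
  also have "\<dots> = c * sqrt D" using assms by (simp add: real_sqrt_mult)
  finally have 1: "sqrt E < c * sqrt D" .
  have "d * sqrt E < d * (c * sqrt D)" using 1 assms by simp
  thus ?thesis using assms by (simp add: field_simps)
qed

lemma ratio_gt:
  fixes d E D C :: real
  assumes "d > 0" "E > 0" "D > 0" "C \<ge> 0" "C^2 * D < E"
  shows "C * (d / sqrt E) < d / sqrt D"
proof -
  have "C * sqrt D = sqrt (C^2 * D)" using assms by (simp add: real_sqrt_mult)
  also have "\<dots> < sqrt E" using assms by simp
  finally have 1: "C * sqrt D < sqrt E" .
  have "d * (C * sqrt D) < d * sqrt E" using 1 assms by simp
  thus ?thesis using assms by (simp add: field_simps)
qed

lemma parallelogram:
  fixes x y :: "'a::euclidean_space"
  shows "(norm (x - y))^2 = 2 * (norm x)^2 + 2 * (norm y)^2 - (norm (x + y))^2"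
  by (simp add: power2_norm_eq_inner inner_diff_left inner_diff_right inner_add_left inner_add_right inner_commute algebra_simps)

lemma norm2_comb:
  fixes e1 e2 :: "'a::euclidean_space"
  assumes "inner e1 e1 = 1" "inner e2 e2 = 1" "inner e1 e2 = 0"
  shows "(norm (p *\<^sub>R e1 + q *\<^sub>R e2))^2 = p^2 + q^2"
proof -
  have "inner e2 e1 = 0" using assms by (simp add: inner_commute)
  thus ?thesis using assms unfolding power2_norm_eq_inner
    by (simp add: inner_add_left inner_add_right power2_eq_square)
qed

lemma main_ineq:
  fixes x y :: "'a::euclidean_space"
  assumes r: "0 \<le> rl" "rl \<le> ru" "ru < 1"
    and xy: "x \<in> ball 0 1" "y \<in> ball 0 1" "rl \<le> norm x" "norm x \<le> norm y" "norm y \<le> ru"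
  shows "sqrt ((1 + rl^2) / 2) * tanh (rho_ball x y / 2) \<le> barrlund (ball 0 1) 2 x y \<and>
            barrlund (ball 0 1) 2 x y \<le> (1 + ru) / sqrt 2 * tanh (rho_ball x y / 2)"
proof -
  have nx: "norm x < 1" and ny: "norm y < 1" using xy by auto
  define a where "a = norm x"
  define b where "b = norm y"
  define s where "s = norm (x + y)"
  define d where "d = norm (x - y)"
  define E where "E = d^2 + (1 - a^2) * (1 - b^2)"
  define D where "D = 2 + a^2 + b^2 - 2 * s"
  have th: "tanh (rho_ball x y / 2) = d / sqrt E"
    using th_formula[OF nx ny] by (simp add: d_def E_def a_def b_def)
  have ba: "barrlund (ball 0 1) 2 x y = d / sqrt D"
    using barr_formula[OF nx ny] by (simp add: d_def D_def a_def b_def s_def)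
  have Dp: "D > 0" using D0_pos[OF nx ny] by (simp add: D_def a_def b_def s_def)
  have ab: "0 \<le> a" "a \<le> b" "b \<le> 1" "rl \<le> a" "b \<le> ru" using xy nx ny by (auto simp: a_def b_def)
  have Pp: "(1 - a^2) * (1 - b^2) > 0" using nx ny ab
    by (simp add: a_def b_def abs_square_less_1)
  have Ep: "E > 0" unfolding E_def using Pp by (simp add: add_nonneg_pos)
  have d0: "d \<ge> 0" by (simp add: d_def)
  have d2: "d^2 = 2 * a^2 + 2 * b^2 - s^2" unfolding a_def b_def s_def d_def by (rule parallelogram)
  have s1: "s \<le> a + b" unfolding s_def a_def b_def by (rule norm_triangle_ineq)
  have s2: "b - a \<le> s"
  proof -
    have "norm y \<le> norm (x + y) + norm (-x)" using norm_triangle_ineq[of "x+y" "-x"] by simp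
    thus ?thesis by (simp add: a_def b_def s_def)
  qed
  have f: "fpoly a b s \<ge> 0" by (rule f_nonneg) (use ab s1 s2 in auto)
  have g: "gpoly a b s \<ge> 0" by (rule g_nonneg) (use ab s1 s2 in auto)
  have L: "(1 + a^2) * D \<le> 2 * E" using f d2 unfolding fpoly_def D_def E_def by simp
  have U: "2 * E \<le> (1 + b)^2 * D" using g d2 unfolding gpoly_def D_def E_def by simp
  have rla: "rl^2 \<le> a^2" using ab r by (simp add: power_mono)
  have bru: "(1+b)^2 \<le> (1+ru)^2" using ab by (simp add: power_mono)
  have k2: "(sqrt ((1 + rl^2) / 2))^2 = (1 + rl^2) / 2" by simp
  have K2: "((1 + ru) / sqrt 2)^2 = (1 + ru)^2 / 2" by (simp add: power_divide)
  have low: "sqrt ((1 + rl^2) / 2) * (d / sqrt E) \<le> d / sqrt D"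
  proof (rule ratio_le[OF d0 Ep Dp])
    show "0 \<le> sqrt ((1 + rl^2) / 2)" by simp
    have "(1 + rl^2) * D \<le> (1 + a^2) * D" using rla Dp by (simp add: mult_right_mono)
    thus "(sqrt ((1 + rl^2) / 2))^2 * D \<le> E" using L k2 by simp
  qed
  have up: "d / sqrt D \<le> (1 + ru) / sqrt 2 * (d / sqrt E)"
  proof (rule ratio_ge[OF d0 Ep Dp])
    show "0 \<le> (1 + ru) / sqrt 2" using r by simp
    have "(1 + b)^2 * D \<le> (1 + ru)^2 * D" using bru Dp by (simp add: mult_right_mono)
    moreover have "(1 + ru)^2 / 2 * D = ((1 + ru)^2 * D) / 2" by simp
    ultimately show "E \<le> ((1 + ru) / sqrt 2)^2 * D" unfolding K2 using U by linarith
  qed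
  show ?thesis using low up th ba by simp
qed

lemma sharp_low:
  fixes rl ru c :: real
  assumes r: "0 \<le> rl" "rl \<le> ru" "ru < 1" "0 < ru" and c: "c > sqrt ((1 + rl^2) / 2)"
  shows "\<exists>x y :: 'a::euclidean_space. x \<in> ball 0 1 \<and> y \<in> ball 0 1 \<and>
              rl \<le> norm x \<and> norm x \<le> norm y \<and> norm y \<le> ru \<and>
              barrlund (ball 0 1) 2 x y < c * tanh (rho_ball x y / 2)"
proof -
  have sq0: "sqrt ((1 + rl^2) / 2) \<ge> 0" by simp
  hence cpos: "c > 0" using c by linarith
  have "(sqrt ((1 + rl^2) / 2))^2 < c^2" using c sq0 by (rule power_strict_mono) simp
  hence c2: "(1 + rl^2) / 2 < c^2" by simp
  obtain t :: real where t: "rl \<le> t" "t \<le> ru" "0 < t" "1 + t^2 < 2 * c^2"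
  proof (cases "rl > 0")
    case True
    show ?thesis by (rule that[of rl]) (use True r c2 in auto)
  next
    case False
    hence rl0: "rl = 0" using r by simp
    define q where "q = sqrt (2 * c^2 - 1) / 2"
    have qpos: "2 * c^2 - 1 > 0" using c2 rl0 by simp
    have q0: "q > 0" unfolding q_def using qpos by simp
    have q2: "q^2 = (2 * c^2 - 1) / 4" unfolding q_def using qpos by (simp add: power_divide)
    define t where "t = min ru q"
    have "t^2 \<le> q^2" unfolding t_def using q0 r by (intro power_mono) auto
    hence "1 + t^2 < 2 * c^2" using q2 qpos by simp
    moreover have "0 < t" "rl \<le> t" "t \<le> ru" unfolding t_def using q0 r rl0 by auto
    ultimately show ?thesis using that by blast
  qed
  obtain e :: 'a where e: "norm e = 1" using vector_choose_size[of 1] by auto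
  define x where "x = t *\<^sub>R e"
  define y where "y = (- t) *\<^sub>R e"
  have nx: "norm x = t" and ny: "norm y = t" using e t by (simp_all add: x_def y_def)
  have sxy: "x + y = 0" by (simp add: x_def y_def)
  have dxy: "x - y = (2 * t) *\<^sub>R e" by (simp add: x_def y_def scaleR_left_distrib[symmetric])
  have nd: "norm (x - y) = 2 * t" using dxy e t by simp
  have t1: "t < 1" using t r by simp
  have nx1: "norm x < 1" and ny1: "norm y < 1" using nx ny t1 by auto
  have ba: "barrlund (ball 0 1) 2 x y = (2 * t) / sqrt (2 + t^2 + t^2 - 2 * 0)"
    using barr_formula[OF nx1 ny1] nx ny sxy nd by simp
  have th: "tanh (rho_ball x y / 2) = (2 * t) / sqrt ((2 * t)^2 + (1 - t^2) * (1 - t^2))"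
    using th_formula[OF nx1 ny1] nx ny nd by simp
  have Ep: "(2 * t)^2 + (1 - t^2) * (1 - t^2) > 0"
    using t by (simp add: add_pos_nonneg)
  have Dp: "2 + t^2 + t^2 - 2 * 0 > (0::real)" using zero_le_power2[of t] by linarith
  have E: "(2 * t)^2 + (1 - t^2) * (1 - t^2) = (1 + t^2) * (1 + t^2)"
    by (simp add: power2_eq_square algebra_simps)
  have "(1 + t^2) * (1 + t^2) < (1 + t^2) * (2 * c^2)"
    using t by (intro mult_strict_left_mono) (auto simp: add_pos_nonneg)
  hence lt: "(2 * t)^2 + (1 - t^2) * (1 - t^2) < c^2 * (2 + t^2 + t^2 - 2 * 0)"
    unfolding E by (simp add: algebra_simps)
  have "barrlund (ball 0 1) 2 x y < c * tanh (rho_ball x y / 2)"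
    unfolding ba th by (rule ratio_lt[OF _ Ep Dp cpos lt]) (use t in simp)
  moreover have "x \<in> ball 0 1" "y \<in> ball 0 1" using nx1 ny1 by auto
  ultimately show ?thesis using nx ny t by (intro exI[of _ x] exI[of _ y]) simp
qed

lemma two_basis:
  assumes "DIM('a) \<ge> 2"
  obtains e1 e2 :: "'a::euclidean_space" where "e1 \<in> Basis" "e2 \<in> Basis" "e1 \<noteq> e2"
proof -
  have "(Basis :: 'a set) \<noteq> {}" by simp
  then obtain e1 :: 'a where e1: "e1 \<in> Basis" by blast
  have "Basis - {e1} \<noteq> {}"
  proof
    assume "Basis - {e1} = {}"
    hence "(Basis :: 'a set) \<subseteq> {e1}" by blast
    hence "card (Basis :: 'a set) \<le> 1" using card_mono[of "{e1}" Basis] by simp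
    thus False using assms by simp
  qed
  then obtain e2 where "e2 \<in> Basis - {e1}" by blast
  thus ?thesis using that e1 by blast
qed

lemma sharp_up:
  fixes rl ru C :: real
  assumes dim: "DIM('a::euclidean_space) \<ge> 2"
    and r: "0 \<le> rl" "rl \<le> ru" "ru < 1" "0 < ru" and C: "C < (1 + ru) / sqrt 2"
  shows "\<exists>x y :: 'a. x \<in> ball 0 1 \<and> y \<in> ball 0 1 \<and>
              rl \<le> norm x \<and> norm x \<le> norm y \<and> norm y \<le> ru \<and>
              C * tanh (rho_ball x y / 2) < barrlund (ball 0 1) 2 x y"
proof -
  obtain e1 e2 :: 'a where e: "e1 \<in> Basis" "e2 \<in> Basis" "e1 \<noteq> e2" using two_basis[OF dim] by blast
  have i11: "inner e1 e1 = 1" and i22: "inner e2 e2 = 1" and i12: "inner e1 e2 = 0"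
    using e by (simp_all add: inner_Basis)
  define rr where "rr = ru"
  have rr: "0 < rr" "rr < 1" "rl \<le> rr" using r by (auto simp: rr_def)
  obtain h q :: real where hq: "0 < h" "h \<le> 1" "q^2 = 2 * h - h^2"
    and key: "0 < C \<Longrightarrow> 2 * C^2 * rr * h < (1 - rr^2)^2 - 2 * C^2 * (1 - rr)^2"
  proof (cases "C > 0")
    case Cp: True
    have "C^2 < ((1 + rr) / sqrt 2)^2" using C Cp by (intro power_strict_mono) (auto simp: rr_def)
    hence C2: "C^2 < (1 + rr)^2 / 2" by (simp add: power_divide)
    have om: "(1 - rr)^2 > 0" using rr by simp
    have "2 * C^2 * (1 - rr)^2 < (1 + rr)^2 * (1 - rr)^2"
      using mult_strict_right_mono[OF C2 om] by simp
    also have "\<dots> = (1 - rr^2)^2" by (simp add: power2_eq_square algebra_simps)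
    finally have gap: "(1 - rr^2)^2 - 2 * C^2 * (1 - rr)^2 > 0" by simp
    define g where "g = (1 - rr^2)^2 - 2 * C^2 * (1 - rr)^2"
    have g: "g > 0" using gap by (simp add: g_def)
    define k where "k = 4 * C^2 * rr + 1"
    have k: "k > 0" unfolding k_def using rr by (simp add: add_nonneg_pos)
    define h where "h = min 1 (g / k)"
    have h: "0 < h" "h \<le> 1" "h \<le> g / k" using g k by (auto simp: h_def)
    have "k * h \<le> g" using h(3) k by (simp add: field_simps)
    moreover have "2 * C^2 * rr * h < k * h"
    proof -
      have pp: "0 \<le> 2 * C^2 * rr * h" using h rr by simp
      have "k * h = 2 * (2 * C^2 * rr * h) + h" by (simp add: k_def algebra_simps)
      thus ?thesis using pp h(1) by linarith
    qed
    ultimately have kk: "2 * C^2 * rr * h < g" by simp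
    have hh: "2 * h - h^2 \<ge> 0" using h by (simp add: power2_eq_square algebra_simps mult_right_le_one_le)
    show ?thesis
    proof (rule that[of h "sqrt (2 * h - h^2)"])
      show "0 < h" "h \<le> 1" using h by auto
      show "(sqrt (2 * h - h^2))^2 = 2 * h - h^2" using hh by simp
      show "2 * C^2 * rr * h < (1 - rr^2)^2 - 2 * C^2 * (1 - rr)^2" using kk by (simp add: g_def)
    qed
  next
    case False
    show ?thesis by (rule that[of 1 1]) (use False in auto)
  qed
  define x where "x = rr *\<^sub>R e1 + 0 *\<^sub>R e2"
  define y where "y = (rr * (1 - h)) *\<^sub>R e1 + (rr * q) *\<^sub>R e2"
  have aux2: "(rr * 2) *\<^sub>R e1 = rr *\<^sub>R e1 + rr *\<^sub>R e1"
    by (metis mult_2_right scaleR_add_left)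
  have xy_add: "x + y = (rr * (2 - h)) *\<^sub>R e1 + (rr * q) *\<^sub>R e2"
    using aux2 by (simp add: x_def y_def algebra_simps)
  have xy_diff: "x - y = (rr * h) *\<^sub>R e1 + (- (rr * q)) *\<^sub>R e2"
    by (simp add: x_def y_def algebra_simps)
  have nc: "\<And>p q. (norm (p *\<^sub>R e1 + q *\<^sub>R e2))^2 = p^2 + q^2"
    by (rule norm2_comb[OF i11 i22 i12])
  have nx2: "(norm x)^2 = rr^2" unfolding x_def nc by simp
  have ny2: "(norm y)^2 = rr^2"
  proof -
    have "(norm y)^2 = (rr * (1 - h))^2 + (rr * q)^2" unfolding y_def nc ..
    also have "\<dots> = rr^2 * ((1 - h)^2 + q^2)" by (simp only: power_mult_distrib distrib_left)
    also have "(1 - h)^2 + q^2 = 1" using hq(3) by (simp add: power2_eq_square algebra_simps)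
    finally show ?thesis by simp
  qed
  have ns2: "(norm (x + y))^2 = rr^2 * (4 - 2 * h)"
  proof -
    have "(norm (x + y))^2 = (rr * (2 - h))^2 + (rr * q)^2" unfolding xy_add nc ..
    also have "\<dots> = rr^2 * ((2 - h)^2 + q^2)" by (simp only: power_mult_distrib distrib_left)
    also have "(2 - h)^2 + q^2 = 4 - 2 * h" using hq(3) by (simp add: power2_eq_square algebra_simps)
    finally show ?thesis by simp
  qed
  have nd2: "(norm (x - y))^2 = 2 * rr^2 * h"
  proof -
    have "(norm (x - y))^2 = (rr * h)^2 + (- (rr * q))^2" unfolding xy_diff nc ..
    also have "\<dots> = rr^2 * (h^2 + q^2)" by (simp only: power2_minus power_mult_distrib distrib_left)
    also have "h^2 + q^2 = 2 * h" using hq(3) by simp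
    finally show ?thesis by simp
  qed
  have nx: "norm x = rr" using power2_eq_imp_eq[OF nx2] rr by simp
  have ny: "norm y = rr" using power2_eq_imp_eq[OF ny2] rr by simp
  have dpos: "norm (x - y) > 0"
  proof -
    have "(norm (x - y))^2 > 0" unfolding nd2 using rr hq by simp
    thus ?thesis by simp
  qed
  have nx1: "norm x < 1" and ny1: "norm y < 1" using nx ny rr by auto
  define s where "s = norm (x + y)"
  define d where "d = norm (x - y)"
  define D where "D = 2 + rr^2 + rr^2 - 2 * s"
  define E where "E = d^2 + (1 - rr^2) * (1 - rr^2)"
  have ba: "barrlund (ball 0 1) 2 x y = d / sqrt D"
    using barr_formula[OF nx1 ny1] nx ny by (simp add: d_def D_def s_def)
  have th: "tanh (rho_ball x y / 2) = d / sqrt E"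
    using th_formula[OF nx1 ny1] nx ny by (simp add: d_def E_def)
  have Dp: "D > 0" using D0_pos[OF nx1 ny1] nx ny by (simp add: D_def s_def)
  have P: "(1 - rr^2) * (1 - rr^2) > 0" using rr by (simp add: abs_square_less_1)
  have Ep: "E > 0" unfolding E_def using P by (simp add: add_nonneg_pos)
  have dp: "d > 0" using dpos by (simp add: d_def)
  have "C * (d / sqrt E) < d / sqrt D"
  proof (cases "C > 0")
    case False
    have "C * (d / sqrt E) \<le> 0" using False dp Ep by (intro mult_nonpos_nonneg) auto
    also have "\<dots> < d / sqrt D" using dp Dp by simp
    finally show ?thesis .
  next
    case Cp: True
    have sge: "rr * (2 - h) \<le> s"
    proof (rule power2_le_imp_le)
      have "(rr * (2 - h))^2 = rr^2 * (4 - 2 * h) - rr^2 * (h * (2 - h))"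
        by (simp add: power2_eq_square algebra_simps)
      also have "\<dots> \<le> rr^2 * (4 - 2 * h)" using hq by simp
      finally show "(rr * (2 - h))^2 \<le> s^2" using ns2 by (simp add: s_def)
      show "0 \<le> s" by (simp add: s_def)
    qed
    have Dle: "D \<le> 2 * (1 - rr)^2 + 2 * rr * h"
      using sge unfolding D_def by (simp add: power2_eq_square algebra_simps)
    have "C^2 * D \<le> C^2 * (2 * (1 - rr)^2 + 2 * rr * h)" using Dle by (simp add: mult_left_mono)
    also have "\<dots> = 2 * C^2 * (1 - rr)^2 + 2 * C^2 * rr * h" by (simp add: algebra_simps)
    also have "\<dots> < (1 - rr^2)^2" using key[OF Cp] by simp
    also have "\<dots> \<le> E" unfolding E_def by (simp add: power2_eq_square)
    finally have "C^2 * D < E" .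
    thus ?thesis using ratio_gt[OF dp Ep Dp] Cp by simp
  qed
  hence "C * tanh (rho_ball x y / 2) < barrlund (ball 0 1) 2 x y" using ba th by simp
  moreover have "x \<in> ball 0 1" "y \<in> ball 0 1" using nx1 ny1 by auto
  ultimately show ?thesis using nx ny rr by (intro exI[of _ x] exI[of _ y]) (simp add: rr_def)
qed

theorem theorem3p5:
  fixes rl ru :: real
  assumes dim: "DIM('a::euclidean_space) \<ge> 2"
    and r: "0 \<le> rl" "rl \<le> ru" "ru < 1"
  shows "(\<forall>x y :: 'a. x \<in> ball 0 1 \<and> y \<in> ball 0 1 \<and> rl \<le> norm x \<and> norm x \<le> norm y \<and> norm y \<le> ru \<longrightarrow>
            sqrt ((1 + rl^2) / 2) * tanh (rho_ball x y / 2) \<le> barrlund (ball 0 1) 2 x y \<and>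
            barrlund (ball 0 1) 2 x y \<le> (1 + ru) / sqrt 2 * tanh (rho_ball x y / 2))
       \<and> (0 < ru \<longrightarrow>
          (\<forall>c > sqrt ((1 + rl^2) / 2). \<exists>x y :: 'a. x \<in> ball 0 1 \<and> y \<in> ball 0 1 \<and>
              rl \<le> norm x \<and> norm x \<le> norm y \<and> norm y \<le> ru \<and>
              barrlund (ball 0 1) 2 x y < c * tanh (rho_ball x y / 2)) \<and>
          (\<forall>C < (1 + ru) / sqrt 2. \<exists>x y :: 'a. x \<in> ball 0 1 \<and> y \<in> ball 0 1 \<and>
              rl \<le> norm x \<and> norm x \<le> norm y \<and> norm y \<le> ru \<and>
              C * tanh (rho_ball x y / 2) < barrlund (ball 0 1) 2 x y))"
proof -
  have P1: "\<forall>x y :: 'a. x \<in> ball 0 1 \<and> y \<in> ball 0 1 \<and> rl \<le> norm x \<and> norm x \<le> norm y \<and> norm y \<le> ru \<longrightarrow>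
            sqrt ((1 + rl^2) / 2) * tanh (rho_ball x y / 2) \<le> barrlund (ball 0 1) 2 x y \<and>
            barrlund (ball 0 1) 2 x y \<le> (1 + ru) / sqrt 2 * tanh (rho_ball x y / 2)"
    using main_ineq[OF r] by blast
  show ?thesis
    using P1 sharp_low[OF r] sharp_up[OF dim r] by blast
qed
end
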